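(* Let $G$ be a finite connected interval graph that is balanced and $p$-critical (for some $p\ge 1$), and let $z$ be a vertex of maximum weight in $G$. If $C$ is an exterior local component at $z$, then $C$ consists of exactly two vertices.
   Context: An interval graph is a finite simple graph whose vertices can be assigned (closed, bounded) real intervals $I_v$ so that $v,w$ are adjacent iff $I_v\cap I_w\ne\emptyset$. For such a representation $\alpha$, $\mathrm{imp}_\alpha(z)$ is the number of intervals $I_w$, $w\ne z$, with $I_w\subseteq I_z$; $\mathrm{imp}(\alpha)=\max_z\mathrm{imp}_\alpha(z)$; and the impropriety $\mathrm{imp}(G)$ is the minimum of $\mathrm{imp}(\alpha)$ over all representations. A local component at $z$ is a connected component of $G\setminus\{z\}$; it is exterior iff it contains a vertex not adjacent to $z$. If $z$ has $n$ local components, $\mathrm{wt}(z)$ is the sum of the $n-2$ smallest orders among the non-exterior local components at $z$ ($0$ if $n\le2$), and $\mathrm{wt}(G)=\max_z \mathrm{wt}(z)$. $G$ is balanced iff $\mathrm{wt}(G)=\mathrm{imp}(G)$. For $p>0$, $G$ is $p$-critical iff $\mathrm{imp}(G)=p$ and every proper induced subgraph of $G$ has impropriety strictly less than $p$. *)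

theory Defs
  imports Complex_Main "HOL-Library.Multiset"
begin

text \<open>A finite simple graph is given by a vertex set V and an adjacency predicate E;
  only pairs of vertices in V are ever consulted, so the induced subgraph on S is (S, E).\<close>

definition simple_graph :: "'a set \<Rightarrow> ('a \<Rightarrow> 'a \<Rightarrow> bool) \<Rightarrow> bool" where
  "simple_graph V E \<longleftrightarrow> finite V \<and> (\<forall>u\<in>V. \<forall>v\<in>V. E u v \<longleftrightarrow> E v u) \<and> (\<forall>v\<in>V. \<not> E v v)"

definition is_interval_rep :: "'a set \<Rightarrow> ('a \<Rightarrow> 'a \<Rightarrow> bool) \<Rightarrow> ('a \<Rightarrow> real set) \<Rightarrow> bool" where
  "is_interval_rep V E I \<longleftrightarrow>
     (\<forall>v\<in>V. \<exists>a b. a \<le> b \<and> I v = {a..b}) \<and>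
     (\<forall>v\<in>V. \<forall>w\<in>V. v \<noteq> w \<longrightarrow> (E v w \<longleftrightarrow> I v \<inter> I w \<noteq> {}))"

definition interval_graph :: "'a set \<Rightarrow> ('a \<Rightarrow> 'a \<Rightarrow> bool) \<Rightarrow> bool" where
  "interval_graph V E \<longleftrightarrow> (\<exists>I. is_interval_rep V E I)"

definition imp_at :: "'a set \<Rightarrow> ('a \<Rightarrow> real set) \<Rightarrow> 'a \<Rightarrow> nat" where
  "imp_at V I z = card {w \<in> V. w \<noteq> z \<and> I w \<subseteq> I z}"

definition imp_rep :: "'a set \<Rightarrow> ('a \<Rightarrow> real set) \<Rightarrow> nat" where
  "imp_rep V I = Max (insert 0 (imp_at V I ` V))"

definition impropriety :: "'a set \<Rightarrow> ('a \<Rightarrow> 'a \<Rightarrow> bool) \<Rightarrow> nat" where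
  "impropriety V E = (LEAST k. \<exists>I. is_interval_rep V E I \<and> imp_rep V I = k)"

definition reach :: "'a set \<Rightarrow> ('a \<Rightarrow> 'a \<Rightarrow> bool) \<Rightarrow> 'a \<Rightarrow> 'a \<Rightarrow> bool" where
  "reach S E = (\<lambda>u v. u \<in> S \<and> v \<in> S \<and> E u v)\<^sup>*\<^sup>*"

definition connected_graph :: "'a set \<Rightarrow> ('a \<Rightarrow> 'a \<Rightarrow> bool) \<Rightarrow> bool" where
  "connected_graph V E \<longleftrightarrow> (\<forall>u\<in>V. \<forall>v\<in>V. reach V E u v)"

definition components :: "'a set \<Rightarrow> ('a \<Rightarrow> 'a \<Rightarrow> bool) \<Rightarrow> 'a set set" where
  "components S E = {{w \<in> S. reach S E v w} | v. v \<in> S}"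

definition local_comps :: "'a set \<Rightarrow> ('a \<Rightarrow> 'a \<Rightarrow> bool) \<Rightarrow> 'a \<Rightarrow> 'a set set" where
  "local_comps V E z = components (V - {z}) E"

definition exterior :: "('a \<Rightarrow> 'a \<Rightarrow> bool) \<Rightarrow> 'a \<Rightarrow> 'a set \<Rightarrow> bool" where
  "exterior E z C \<longleftrightarrow> (\<exists>w\<in>C. \<not> E z w)"

text \<open>wt(z): sum of the n-2 smallest orders among non-exterior local components
  (all of them if there are fewer; 0 if n \<le> 2).\<close>
definition wt_at :: "'a set \<Rightarrow> ('a \<Rightarrow> 'a \<Rightarrow> bool) \<Rightarrow> 'a \<Rightarrow> nat" where
  "wt_at V E z =
     (let LC = local_comps V E z;
          NE = {C \<in> LC. \<not> exterior E z C};
          n = card LC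
      in sum_list (take (n - 2) (sorted_list_of_multiset (image_mset card (mset_set NE)))))"

definition wt :: "'a set \<Rightarrow> ('a \<Rightarrow> 'a \<Rightarrow> bool) \<Rightarrow> nat" where
  "wt V E = Max (insert 0 (wt_at V E ` V))"

definition balanced :: "'a set \<Rightarrow> ('a \<Rightarrow> 'a \<Rightarrow> bool) \<Rightarrow> bool" where
  "balanced V E \<longleftrightarrow> wt V E = impropriety V E"

definition critical :: "nat \<Rightarrow> 'a set \<Rightarrow> ('a \<Rightarrow> 'a \<Rightarrow> bool) \<Rightarrow> bool" where
  "critical p V E \<longleftrightarrow> impropriety V E = p \<and> (\<forall>S. S \<subset> V \<longrightarrow> impropriety S E < p)"

end

theory Submission
  imports Defs
begin


lemma reach_in: "reach S E a b \<Longrightarrow> a \<in> S \<Longrightarrow> b \<in> S"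
  unfolding reach_def by (induction rule: rtranclp_induct) auto

lemma reach_mono: assumes "S \<subseteq> T" "reach S E a b" shows "reach T E a b"
  using assms(2) unfolding reach_def
proof (induction rule: rtranclp_induct)
  case base then show ?case by simp
next
  case (step y c) then show ?case using assms(1) by (auto intro: rtranclp.rtrancl_into_rtrancl)
qed

lemma reach_step: "reach S E a b \<Longrightarrow> b \<in> S \<Longrightarrow> c \<in> S \<Longrightarrow> E b c \<Longrightarrow> reach S E a c"
  unfolding reach_def by (auto intro: rtranclp.rtrancl_into_rtrancl)

lemma reach_sym:
  assumes sym: "\<forall>u\<in>V. \<forall>v\<in>V. E u v \<longleftrightarrow> E v u" and "S \<subseteq> V" and "reach S E a b"
  shows "reach S E b a"
  using assms(3) unfolding reach_def
proof (induction rule: rtranclp_induct)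
  case base then show ?case by simp
next
  case (step y c)
  then have "E c y" using sym assms(2) by blast
  with step show ?case by (auto intro: converse_rtranclp_into_rtranclp)
qed

lemma reach_trans: "reach S E a b \<Longrightarrow> reach S E b c \<Longrightarrow> reach S E a c"
  unfolding reach_def by auto

locale sg =
  fixes V :: "'a set" and E :: "'a \<Rightarrow> 'a \<Rightarrow> bool"
  assumes sym: "\<forall>u\<in>V. \<forall>v\<in>V. E u v \<longleftrightarrow> E v u"
begin

lemma comp_eq:
  assumes "S \<subseteq> V" "D \<in> components S E" "d \<in> D"
  shows "D = {w \<in> S. reach S E d w}" "D \<subseteq> S"
proof -
  obtain c where c: "c \<in> S" "D = {w \<in> S. reach S E c w}" using assms unfolding components_def by auto
  have cd: "reach S E c d" "d \<in> S" using c assms by auto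
  then have dc: "reach S E d c" using reach_sym[OF sym assms(1)] by blast
  show "D = {w \<in> S. reach S E d w}"
  proof (rule set_eqI, rule iffI)
    fix w assume "w \<in> D" then have "w \<in> S" "reach S E c w" using c by auto
    then show "w \<in> {w \<in> S. reach S E d w}" using reach_trans[OF dc] by auto
  next
    fix w assume "w \<in> {w \<in> S. reach S E d w}"
    then show "w \<in> D" using c reach_trans[OF cd(1)] by auto
  qed
  show "D \<subseteq> S" using c by auto
qed

lemma comp_ne: assumes "D \<in> components S E" shows "D \<noteq> {}"
proof -
  obtain c where c: "c \<in> S" "D = {w \<in> S. reach S E c w}" using assms unfolding components_def by auto
  then have "c \<in> D" unfolding reach_def by simp
  then show ?thesis by auto
qed

lemma comp_closed:
  assumes "S \<subseteq> V" "D \<in> components S E" "a \<in> D" "b \<in> S" "E a b"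
  shows "b \<in> D"
proof -
  have "D = {w \<in> S. reach S E a w}" "D \<subseteq> S" using comp_eq assms by auto
  moreover have "reach S E a b" using assms \<open>D \<subseteq> S\<close> unfolding reach_def by auto
  ultimately show ?thesis using assms by auto
qed

lemma comp_disj:
  assumes "S \<subseteq> V" "D1 \<in> components S E" "D2 \<in> components S E" "x \<in> D1" "x \<in> D2"
  shows "D1 = D2"
  using comp_eq[OF assms(1,2,4)] comp_eq[OF assms(1,3,5)] by simp

lemma comp_noedge:
  assumes "S \<subseteq> V" "D1 \<in> components S E" "D2 \<in> components S E" "D1 \<noteq> D2" "a \<in> D1" "b \<in> D2"
  shows "\<not> E a b"
proof
  assume "E a b"
  have "b \<in> S" using comp_eq assms by blast
  then have "b \<in> D1" using comp_closed assms \<open>E a b\<close> by blast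
  then show False using comp_disj assms by blast
qed

lemma comp_inner:
  assumes "S \<subseteq> V" "D \<in> components S E" "d \<in> D" "w \<in> D"
  shows "reach D E d w"
proof -
  have D: "D = {w \<in> S. reach S E d w}" "D \<subseteq> S" using comp_eq assms by auto
  have "reach S E d w" using D assms by auto
  then show ?thesis unfolding reach_def
  proof (induction rule: rtranclp_induct)
    case base then show ?case by simp
  next
    case (step y b)
    have "y \<in> S" "b \<in> S" "E y b" using step by auto
    have "reach S E d y" using step(1) unfolding reach_def .
    then have "y \<in> D" using D \<open>y \<in> S\<close> by auto
    have "reach S E d b" using step(1,2) unfolding reach_def by (rule rtranclp.rtrancl_into_rtrancl)
    then have "b \<in> D" using D \<open>b \<in> S\<close> by auto
    show ?case using step(3) \<open>y \<in> D\<close> \<open>b \<in> D\<close> \<open>E y b\<close>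
      by (auto intro: rtranclp.rtrancl_into_rtrancl)
  qed
qed

lemma neighbor_exists:
  assumes conn: "connected_graph V E" and z: "z \<in> V" and D: "D \<in> components (V - {z}) E"
  shows "\<exists>w\<in>D. E z w"
proof -
  obtain d where d: "d \<in> D" using comp_ne D by blast
  have DS: "D \<subseteq> V - {z}" using comp_eq[OF _ D d] by auto
  have "reach V E z d" using conn z DS d unfolding connected_graph_def by auto
  have key: "x \<in> D \<or> (\<exists>w\<in>D. E z w)" if "reach V E x d" for x
    using that unfolding reach_def
  proof (induction rule: converse_rtranclp_induct)
    case base then show ?case using d by simp
  next
    case (step a b)
    show ?case
    proof (cases "b \<in> D")
      case True
      show ?thesis
      proof (cases "a = z")
        case True then show ?thesis using step \<open>b \<in> D\<close> by auto
      next
        case False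
        have "E b a" using step(1) sym by auto
        then have "a \<in> D" using comp_closed[OF _ D \<open>b \<in> D\<close>] step(1) False by auto
        then show ?thesis by simp
      qed
    next
      case False then show ?thesis using step by auto
    qed
  qed
  show ?thesis using key[OF \<open>reach V E z d\<close>] DS by auto
qed

end

lemma crossing:
  assumes "reach S E r y" "r \<in> T" "y \<notin> T"
  shows "\<exists>a b. a \<in> T \<and> b \<notin> T \<and> b \<in> S \<and> E a b"
  using assms unfolding reach_def
proof (induction rule: rtranclp_induct)
  case base then show ?case by simp
next
  case (step y' y)
  then show ?case by (cases "y' \<in> T") auto
qed

lemma noncut:
  assumes "finite S" "r \<in> S" "card S \<ge> 2" "\<forall>w\<in>S. reach S E r w"
  shows "\<exists>x\<in>S. x \<noteq> r \<and> (\<forall>w\<in>S - {x}. reach (S - {x}) E r w)"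
proof -
  define P where "P T \<longleftrightarrow> r \<in> T \<and> T \<subset> S \<and> (\<forall>w\<in>T. reach T E r w)" for T
  have "S \<noteq> {r}" using assms(3) by auto
  then have "{r} \<subset> S" using assms(2) by auto
  then have P1: "P {r}" unfolding P_def reach_def by auto
  have "\<forall>T. P T \<longrightarrow> card T < card S + 1"
    using assms(1) unfolding P_def by (auto intro!: card_mono simp: less_Suc_eq_le)
  then obtain T where T: "P T" "\<And>T'. P T' \<Longrightarrow> card T' \<le> card T"
    using ex_has_greatest_nat[of P "{r}" card] P1 by blast
  have TS: "T \<subset> S" "r \<in> T" "\<forall>w\<in>T. reach T E r w" using T(1) unfolding P_def by auto
  then obtain y where y: "y \<in> S" "y \<notin> T" by blast
  obtain a b where ab: "a \<in> T" "b \<notin> T" "b \<in> S" "E a b"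
    using crossing[OF _ TS(2) y(2)] assms(4) y(1) by blast
  have aS: "a \<in> S" using ab TS by blast
  define T' where "T' = insert b T"
  have R': "\<forall>w\<in>T'. reach T' E r w"
  proof
    fix w assume "w \<in> T'"
    have "T \<subseteq> T'" unfolding T'_def by auto
    show "reach T' E r w"
    proof (cases "w = b")
      case True
      have "reach T' E r a" using reach_mono[OF \<open>T \<subseteq> T'\<close>] TS ab by blast
      then show ?thesis using True reach_step[of T' E r a b] ab unfolding T'_def by auto
    next
      case False
      then show ?thesis using \<open>w \<in> T'\<close> reach_mono[OF \<open>T \<subseteq> T'\<close>] TS unfolding T'_def by auto
    qed
  qed
  have "T' \<subseteq> S" using ab TS unfolding T'_def by auto
  have "T' = S"
  proof (rule ccontr)
    assume "T' \<noteq> S"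
    then have "P T'" using \<open>T' \<subseteq> S\<close> R' TS unfolding P_def T'_def by auto
    then have "card T' \<le> card T" using T by blast
    moreover have "finite T" using TS assms(1) finite_subset by blast
    ultimately show False using ab unfolding T'_def by simp
  qed
  then have "S - {b} = T" using ab unfolding T'_def by auto
  then show ?thesis using ab TS by auto
qed




lemma path_conn:
  assumes rep: "\<forall>v\<in>D. \<exists>a b. a \<le> b \<and> I v = {a..b::real}"
    and adj: "\<forall>v\<in>D. \<forall>w\<in>D. v \<noteq> w \<longrightarrow> E v w \<longrightarrow> I v \<inter> I w \<noteq> {}"
    and "reach D E d w" and "d \<in> D"
  shows "\<exists>P\<subseteq>D. d \<in> P \<and> w \<in> P \<and> connected (\<Union>x\<in>P. I x)"
  using assms(3) unfolding reach_def
proof (induction rule: rtranclp_induct)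
  case base
  obtain a b where "I d = {a..b}" using rep \<open>d \<in> D\<close> by blast
  then show ?case using \<open>d \<in> D\<close> by (intro exI[of _ "{d}"]) auto
next
  case (step y c)
  then obtain P where P: "P \<subseteq> D" "d \<in> P" "y \<in> P" "connected (\<Union>x\<in>P. I x)" by blast
  have yc: "y \<in> D" "c \<in> D" "E y c" using step by auto
  show ?case
  proof (cases "y = c")
    case True then show ?thesis using P by blast
  next
    case False
    then have ne: "I y \<inter> I c \<noteq> {}" using adj yc by blast
    obtain a b where ab: "I c = {a..b}" using rep yc by blast
    have "(\<Union>x\<in>insert c P. I x) = I c \<union> (\<Union>x\<in>P. I x)" by auto
    moreover have "I c \<inter> (\<Union>x\<in>P. I x) \<noteq> {}" using ne P(3) by blast
    ultimately have "connected (\<Union>x\<in>insert c P. I x)"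
      using connected_Un[of "I c" "\<Union>x\<in>P. I x"] P(4) ab by simp
    then show ?thesis using P yc by (intro exI[of _ "insert c P"]) auto
  qed
qed

lemma union_conn:
  assumes rep: "\<forall>v\<in>D. \<exists>a b. a \<le> b \<and> I v = {a..b::real}"
    and adj: "\<forall>v\<in>D. \<forall>w\<in>D. v \<noteq> w \<longrightarrow> E v w \<longrightarrow> I v \<inter> I w \<noteq> {}"
    and d: "d \<in> D" and R: "\<forall>w\<in>D. reach D E d w"
  shows "connected (\<Union>w\<in>D. I w)"
proof -
  have "\<forall>w\<in>D. \<exists>P. P\<subseteq>D \<and> d \<in> P \<and> w \<in> P \<and> connected (\<Union>x\<in>P. I x)"
    using path_conn[OF rep adj _ d] R by blast
  then obtain Pf where Pf: "\<And>w. w \<in> D \<Longrightarrow> Pf w \<subseteq> D \<and> d \<in> Pf w \<and> w \<in> Pf w \<and> connected (\<Union>x\<in>Pf w. I x)"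
    by metis
  have eq: "(\<Union>w\<in>D. I w) = \<Union>((\<lambda>w. \<Union>x\<in>Pf w. I x) ` D)"
  proof
    show "(\<Union>w\<in>D. I w) \<subseteq> \<Union>((\<lambda>w. \<Union>x\<in>Pf w. I x) ` D)" using Pf by blast
    show "\<Union>((\<lambda>w. \<Union>x\<in>Pf w. I x) ` D) \<subseteq> (\<Union>w\<in>D. I w)" using Pf by blast
  qed
  obtain a b where ab: "a \<le> b" "I d = {a..b}" using rep d by blast
  have "a \<in> \<Inter>((\<lambda>w. \<Union>x\<in>Pf w. I x) ` D)" using Pf ab by fastforce
  then have "\<Inter>((\<lambda>w. \<Union>x\<in>Pf w. I x) ` D) \<noteq> {}" by blast
  have "connected (\<Union>((\<lambda>w. \<Union>x\<in>Pf w. I x) ` D))"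
    apply (rule connected_Union)
    using Pf apply auto[1]
    using \<open>\<Inter>((\<lambda>w. \<Union>x\<in>Pf w. I x) ` D) \<noteq> {}\<close> by simp
  then show ?thesis using eq by simp
qed

lemma touch_end:
  fixes U :: "real set"
  assumes "connected U" "U \<inter> {a..b} \<noteq> {}" "\<not> U \<subseteq> {a..b}"
  shows "a \<in> U \<or> b \<in> U"
proof -
  obtain y where y: "y \<in> U" "a \<le> y" "y \<le> b" using assms(2) by auto
  obtain x where x0: "x \<in> U" "x \<notin> {a..b}" using assms(3) by blast
  then have x: "x \<in> U" "x < a \<or> b < x" by auto
  show ?thesis
  proof (cases "x < a")
    case True
    then have "a \<in> U" using connectedD_interval[OF assms(1) x(1) y(1)] y by auto
    then show ?thesis by simp
  next
    case False
    then have "b < x" using x by simp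
    then have "b \<in> U" using connectedD_interval[OF assms(1) y(1) x(1)] y by auto
    then show ?thesis by simp
  qed
qed

lemma at_most_two:
  fixes U :: "'b \<Rightarrow> real set"
  assumes "finite F" "\<forall>D\<in>F. connected (U D)" "\<forall>D\<in>F. U D \<inter> {a..b} \<noteq> {}"
    "\<forall>D1\<in>F. \<forall>D2\<in>F. D1 \<noteq> D2 \<longrightarrow> U D1 \<inter> U D2 = {}"
  shows "card {D\<in>F. \<not> U D \<subseteq> {a..b}} \<le> 2"
proof -
  have sub: "{D\<in>F. \<not> U D \<subseteq> {a..b}} \<subseteq> {D\<in>F. a \<in> U D} \<union> {D\<in>F. b \<in> U D}"
  proof
    fix D assume "D \<in> {D\<in>F. \<not> U D \<subseteq> {a..b}}"
    then have "D \<in> F" "\<not> U D \<subseteq> {a..b}" by auto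
    then have "a \<in> U D \<or> b \<in> U D" using touch_end[of "U D" a b] assms(2,3) by simp
    then show "D \<in> {D\<in>F. a \<in> U D} \<union> {D\<in>F. b \<in> U D}" using \<open>D \<in> F\<close> by simp
  qed
  have c1: "card {D\<in>F. a \<in> U D} \<le> 1"
  proof -
    have "finite {D\<in>F. a \<in> U D}" using assms(1) by simp
    moreover have "\<forall>x1\<in>{D\<in>F. a \<in> U D}. \<forall>x2\<in>{D\<in>F. a \<in> U D}. x1 = x2"
      using assms(4) by blast
    ultimately show ?thesis by (simp add: card_le_Suc0_iff_eq)
  qed
  have c2: "card {D\<in>F. b \<in> U D} \<le> 1"
  proof -
    have "finite {D\<in>F. b \<in> U D}" using assms(1) by simp
    moreover have "\<forall>x1\<in>{D\<in>F. b \<in> U D}. \<forall>x2\<in>{D\<in>F. b \<in> U D}. x1 = x2"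
      using assms(4) by blast
    ultimately show ?thesis by (simp add: card_le_Suc0_iff_eq)
  qed
  have "card {D\<in>F. \<not> U D \<subseteq> {a..b}} \<le> card ({D\<in>F. a \<in> U D} \<union> {D\<in>F. b \<in> U D})"
    using sub assms(1) by (intro card_mono) auto
  also have "\<dots> \<le> card {D\<in>F. a \<in> U D} + card {D\<in>F. b \<in> U D}" by (rule card_Un_le)
  finally show ?thesis using c1 c2 by simp
qed

lemma take_cons_le:
  "\<forall>y\<in>set xs. x \<le> y \<Longrightarrow> sorted xs \<Longrightarrow> k \<le> length xs \<Longrightarrow>
   sum_list (take k (x#xs)) \<le> sum_list (take k (xs::nat list))"
proof (induction xs arbitrary: x k)
  case Nil then show ?case by simp
next
  case (Cons y ys)
  show ?case
  proof (cases k)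
    case 0 then show ?thesis by simp
  next
    case (Suc k')
    have "sum_list (take k' (y#ys)) \<le> sum_list (take k' ys)"
      using Cons Suc by auto
    then show ?thesis using Cons.prems Suc by simp
  qed
qed

lemma insort_le:
  "sorted xs \<Longrightarrow> k \<le> length xs \<Longrightarrow>
   sum_list (take k (insort x xs)) \<le> sum_list (take k (xs::nat list))"
proof (induction xs arbitrary: k)
  case Nil then show ?case by simp
next
  case (Cons y ys)
  show ?case
  proof (cases "x \<le> y")
    case True
    then have "insort x (y#ys) = x#y#ys" by simp
    moreover have "\<forall>w\<in>set (y#ys). x \<le> w" using True Cons.prems by auto
    ultimately show ?thesis using take_cons_le[of "y#ys" x k] Cons.prems by simp
  next
    case False
    then have eq: "insort x (y#ys) = y # insort x ys" by simp
    show ?thesis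
    proof (cases k)
      case 0 then show ?thesis by simp
    next
      case (Suc k')
      then show ?thesis using Cons eq by auto
    qed
  qed
qed

lemma len_sl: "length (sorted_list_of_multiset M) = size M"
  by (metis mset_sorted_list_of_multiset size_mset)

lemma ms_mono:
  "k \<le> size M \<Longrightarrow> sum_list (take k (sorted_list_of_multiset (M + N))) \<le> sum_list (take k (sorted_list_of_multiset (M::nat multiset)))"
proof (induction N)
  case empty then show ?case by simp
next
  case (add x N)
  have "sum_list (take k (sorted_list_of_multiset (M + add_mset x N)))
      = sum_list (take k (insort x (sorted_list_of_multiset (M + N))))" by simp
  also have "\<dots> \<le> sum_list (take k (sorted_list_of_multiset (M + N)))"
    using add.prems by (intro insort_le) (auto simp: len_sl)
  finally show ?case using add by simp
qed

lemma sub_le: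
  assumes "A \<subseteq># M" "k \<le> size A"
  shows "sum_list (take k (sorted_list_of_multiset M)) \<le> sum_mset (A::nat multiset)"
proof -
  have "M = A + (M - A)" using assms(1) by simp
  then have "sum_list (take k (sorted_list_of_multiset M)) \<le> sum_list (take k (sorted_list_of_multiset A))"
    using ms_mono[OF assms(2), of "M - A"] by simp
  also have "\<dots> \<le> sum_list (sorted_list_of_multiset A)"
    by (metis append_take_drop_id sum_list_append le_add1)
  also have "\<dots> = sum_mset A" by (metis mset_sorted_list_of_multiset sum_mset_sum_list)
  finally show ?thesis .
qed




lemma key:
  assumes sg: "simple_graph V E" and conn: "connected_graph V E" and z: "z \<in> V"
    and C: "C \<in> local_comps V E z" and x: "x \<in> C" and r: "r \<in> C - {x}"
    and Rx: "\<forall>w\<in>C - {x}. reach (C - {x}) E r w"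
    and nb: "nb \<in> C - {x}" "E z nb" and nn: "nn \<in> C - {x}" "\<not> E z nn"
    and rep: "is_interval_rep (V - {x}) E I"
  shows "wt_at V E z \<le> imp_rep (V - {x}) I"
proof -
  have sym: "\<forall>u\<in>V. \<forall>v\<in>V. E u v \<longleftrightarrow> E v u" and finV: "finite V"
    using sg unfolding simple_graph_def by auto
  interpret sg V E by unfold_locales (rule sym)
  define S0 where "S0 = V - {z}"
  define H where "H = V - {x}"
  define LC where "LC = local_comps V E z"
  define Cx where "Cx = C - {x}"
  have S0V: "S0 \<subseteq> V" unfolding S0_def by auto
  have LC: "LC = components S0 E" unfolding LC_def S0_def local_comps_def by simp
  have CLC: "C \<in> LC" using C unfolding LC_def .
  have CS0: "C \<subseteq> S0" using comp_eq[OF S0V _ x] CLC LC by auto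
  have LCsub: "\<And>D. D \<in> LC \<Longrightarrow> D \<subseteq> S0"
  proof -
    fix D assume "D \<in> LC"
    then obtain d where "d \<in> D" using comp_ne LC by blast
    then show "D \<subseteq> S0" using comp_eq[OF S0V _ \<open>d \<in> D\<close>] \<open>D \<in> LC\<close> LC by auto
  qed
  have finLC: "finite LC"
  proof -
    have "LC \<subseteq> Pow V" using LCsub S0V by auto
    moreover have "finite (Pow V)" using finV by simp
    ultimately show ?thesis by (rule finite_subset)
  qed
  have xz: "x \<noteq> z" using x CS0 unfolding S0_def by auto
  have zH: "z \<in> H" unfolding H_def using z xz by auto
  have finH: "finite H" unfolding H_def using finV by auto
  have repu: "(\<forall>v\<in>H. \<exists>a b. a \<le> b \<and> I v = {a..b}) \<and>
       (\<forall>v\<in>H. \<forall>w\<in>H. v \<noteq> w \<longrightarrow> (E v w \<longleftrightarrow> I v \<inter> I w \<noteq> {}))"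
    using rep unfolding is_interval_rep_def H_def by assumption
  have rep1: "\<forall>v\<in>H. \<exists>a b. a \<le> b \<and> I v = {a..b}" using repu by (rule conjunct1)
  have rep2: "\<forall>v\<in>H. \<forall>w\<in>H. v \<noteq> w \<longrightarrow> (E v w \<longleftrightarrow> I v \<inter> I w \<noteq> {})"
    using repu by (rule conjunct2)
  have Ine: "I v \<noteq> {}" if "v \<in> H" for v
  proof -
    have "\<exists>a b. a \<le> b \<and> I v = {a..b}" using rep1 that by (rule bspec)
    then show ?thesis by auto
  qed
  have Ddisj: "\<And>D. D \<in> LC - {C} \<Longrightarrow> D \<inter> C = {}"
    using comp_disj[OF S0V] LC CLC by blast
  have DH: "\<And>D. D \<in> LC - {C} \<Longrightarrow> D \<subseteq> H"
  proof -
    fix D assume D: "D \<in> LC - {C}"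
    then have "D \<subseteq> S0" "D \<inter> C = {}" using LCsub Ddisj by auto
    then show "D \<subseteq> H" unfolding H_def S0_def using x by auto
  qed
  have CxH: "Cx \<subseteq> H" unfolding Cx_def H_def using CS0 S0V by auto
  define F where "F = insert Cx (LC - {C})"
  have FH: "\<And>D. D \<in> F \<Longrightarrow> D \<subseteq> H" unfolding F_def using DH CxH by auto
  have Fz: "\<And>D. D \<in> F \<Longrightarrow> z \<notin> D"
    unfolding F_def Cx_def using LCsub CS0 unfolding S0_def by auto
  have finF: "finite F" unfolding F_def using finLC by auto
  have sep: "\<And>D1 D2 v w. D1 \<in> F \<Longrightarrow> D2 \<in> F \<Longrightarrow> D1 \<noteq> D2 \<Longrightarrow> v \<in> D1 \<Longrightarrow> w \<in> D2
              \<Longrightarrow> v \<noteq> w \<and> \<not> E v w"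
  proof -
    fix D1 D2 v w assume D12: "D1 \<in> F" "D2 \<in> F" "D1 \<noteq> D2" "v \<in> D1" "w \<in> D2"
    have orig: "\<exists>Q. Q \<in> LC \<and> D \<subseteq> Q \<and> (D = Cx \<longrightarrow> Q = C) \<and> (D \<noteq> Cx \<longrightarrow> Q = D \<and> D \<noteq> C)"
      if "D \<in> F" for D
    proof (cases "D = Cx")
      case True then show ?thesis using CLC unfolding Cx_def by auto
    next
      case False then show ?thesis using that unfolding F_def by auto
    qed
    obtain O1 where O1: "O1 \<in> LC" "D1 \<subseteq> O1" "D1 = Cx \<longrightarrow> O1 = C" "D1 \<noteq> Cx \<longrightarrow> O1 = D1 \<and> D1 \<noteq> C"
      using orig[OF D12(1)] by blast
    obtain O2 where O2: "O2 \<in> LC" "D2 \<subseteq> O2" "D2 = Cx \<longrightarrow> O2 = C" "D2 \<noteq> Cx \<longrightarrow> O2 = D2 \<and> D2 \<noteq> C"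
      using orig[OF D12(2)] by blast
    have "O1 \<noteq> O2"
    proof (cases "D1 = Cx")
      case True
      then have "D2 \<noteq> Cx" using D12 by simp
      then show ?thesis using O1(3) O2(4) True by auto
    next
      case False
      show ?thesis
      proof (cases "D2 = Cx")
        case True then show ?thesis using O1(4) O2(3) False by auto
      next
        case False2: False
        then show ?thesis using O1(4) O2(4) False D12(3) by simp
      qed
    qed
    have vw: "v \<in> O1" "w \<in> O2" using O1(2) O2(2) D12(4,5) by auto
    have O1c: "O1 \<in> components S0 E" and O2c: "O2 \<in> components S0 E" using O1(1) O2(1) LC by simp_all
    have "v \<noteq> w"
    proof
      assume "v = w"
      then have "v \<in> O2" using vw by simp
      then have "O1 = O2" using comp_disj[OF S0V O1c O2c vw(1)] by simp
      then show False using \<open>O1 \<noteq> O2\<close> by simp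
    qed
    moreover have "\<not> E v w"
      using comp_noedge[OF S0V O1c O2c \<open>O1 \<noteq> O2\<close> vw] .
    ultimately show "v \<noteq> w \<and> \<not> E v w" by simp
  qed
  define U where "U D = (\<Union>w\<in>D. I w)" for D
  have Udisj: "\<forall>D1\<in>F. \<forall>D2\<in>F. D1 \<noteq> D2 \<longrightarrow> U D1 \<inter> U D2 = {}"
  proof (intro ballI impI)
    fix D1 D2 assume D12: "D1 \<in> F" "D2 \<in> F" "D1 \<noteq> D2"
    have "\<And>v w. v \<in> D1 \<Longrightarrow> w \<in> D2 \<Longrightarrow> I v \<inter> I w = {}"
    proof -
      fix v w assume "v \<in> D1" "w \<in> D2"
      then have "v \<noteq> w" "\<not> E v w" using sep D12 by auto
      moreover have "v \<in> H" "w \<in> H" using FH D12 \<open>v \<in> D1\<close> \<open>w \<in> D2\<close> by auto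
      ultimately show "I v \<inter> I w = {}" using rep2 by simp
    qed
    then show "U D1 \<inter> U D2 = {}" unfolding U_def by blast
  qed
  have Uconn: "\<forall>D\<in>F. connected (U D)"
  proof
    fix D assume D: "D \<in> F"
    have r1: "\<forall>v\<in>D. \<exists>a b. a \<le> b \<and> I v = {a..b}"
    proof
      fix v assume "v \<in> D"
      then have "v \<in> H" using FH[OF D] by auto
      then show "\<exists>a b. a \<le> b \<and> I v = {a..b}" by (rule bspec[OF rep1])
    qed
    have r2: "\<forall>v\<in>D. \<forall>w\<in>D. v \<noteq> w \<longrightarrow> E v w \<longrightarrow> I v \<inter> I w \<noteq> {}"
    proof (intro ballI)
      fix v w assume "v \<in> D" "w \<in> D"
      then have "v \<in> H" "w \<in> H" using FH[OF D] by auto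
      then show "v \<noteq> w \<longrightarrow> E v w \<longrightarrow> I v \<inter> I w \<noteq> {}" using rep2 by simp
    qed
    show "connected (U D)"
    proof (cases "D = Cx")
      case True
      have rD: "r \<in> D" using r True unfolding Cx_def by simp
      have RD: "\<forall>w\<in>D. reach D E r w" using Rx True unfolding Cx_def by simp
      show ?thesis unfolding U_def by (rule union_conn[OF r1 r2 rD RD])
    next
      case False
      then have DL: "D \<in> LC" using D unfolding F_def by auto
      then obtain d where d: "d \<in> D" using comp_ne LC by blast
      have "\<forall>w\<in>D. reach D E d w" using comp_inner[OF S0V _ d] DL LC by auto
      then show ?thesis unfolding U_def by (rule union_conn[OF r1 r2 d])
    qed
  qed
  have "\<exists>a b. a \<le> b \<and> I z = {a..b}" using rep1 zH by (rule bspec)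
  then obtain a b where ab: "a \<le> b" "I z = {a..b}" by auto
  have Utouch: "\<forall>D\<in>F. U D \<inter> {a..b} \<noteq> {}"
  proof
    fix D assume D: "D \<in> F"
    obtain w where w: "w \<in> D" "E z w"
    proof (cases "D = Cx")
      case True then show ?thesis using that nb unfolding Cx_def by auto
    next
      case False
      then have DL: "D \<in> LC" using D unfolding F_def by auto
      show ?thesis using neighbor_exists[OF conn z] DL LC that unfolding S0_def by auto
    qed
    have "w \<in> H" "w \<noteq> z" using FH[OF D] Fz[OF D] w by auto
    then have "I z \<inter> I w \<noteq> {}" using rep2 zH w by simp
    then show "U D \<inter> {a..b} \<noteq> {}" using w ab unfolding U_def by blast
  qed
  have two: "card {D\<in>F. \<not> U D \<subseteq> {a..b}} \<le> 2"
    by (rule at_most_two[OF finF Uconn Utouch Udisj])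
  define Fin where "Fin = {D\<in>F. U D \<subseteq> {a..b}}"
  have cardF: "card F = card LC"
  proof -
    have "Cx \<notin> LC - {C}"
    proof
      assume "Cx \<in> LC - {C}"
      then have "Cx \<inter> C = {}" using Ddisj by blast
      then show False using nb unfolding Cx_def by auto
    qed
    then have "card F = Suc (card (LC - {C}))" unfolding F_def using finLC by simp
    then show ?thesis using card_Suc_Diff1[OF finLC CLC] by simp
  qed
  have "F = Fin \<union> {D\<in>F. \<not> U D \<subseteq> {a..b}}" unfolding Fin_def by auto
  then have "card F \<le> card Fin + card {D\<in>F. \<not> U D \<subseteq> {a..b}}"
    using card_Un_le[of Fin "{D\<in>F. \<not> U D \<subseteq> {a..b}}"] by simp
  then have cardFin: "card LC - 2 \<le> card Fin" using two cardF by linarith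
  define NE where "NE = {D \<in> LC. \<not> exterior E z D}"
  have FinNE: "Fin \<subseteq> NE"
  proof
    fix D assume D: "D \<in> Fin"
    then have DF: "D \<in> F" and DU: "U D \<subseteq> {a..b}" unfolding Fin_def by auto
    have "D \<noteq> Cx"
    proof
      assume "D = Cx"
      have "nn \<in> H" "nn \<noteq> z" using nn CxH Fz[OF DF] \<open>D = Cx\<close> unfolding Cx_def by auto
      then have "I z \<inter> I nn = {}" using rep2 zH nn by simp
      moreover have "I nn \<subseteq> I z" using DU \<open>D = Cx\<close> nn ab unfolding U_def Cx_def by blast
      ultimately show False using Ine[OF \<open>nn \<in> H\<close>] by blast
    qed
    then have DL: "D \<in> LC" using DF unfolding F_def by auto
    have "\<forall>w\<in>D. E z w"
    proof
      fix w assume w: "w \<in> D"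
      have "w \<in> H" "w \<noteq> z" using FH[OF DF] Fz[OF DF] w by auto
      moreover have "I w \<subseteq> I z" using DU w ab unfolding U_def by blast
      ultimately have "I z \<inter> I w \<noteq> {}" using Ine[OF \<open>w \<in> H\<close>] by blast
      then show "E z w" using rep2 zH \<open>w \<in> H\<close> \<open>w \<noteq> z\<close> by simp
    qed
    then show "D \<in> NE" unfolding NE_def exterior_def using DL by auto
  qed
  have finNE: "finite NE" unfolding NE_def using finLC by auto
  have "wt_at V E z = sum_list (take (card LC - 2) (sorted_list_of_multiset (image_mset card (mset_set NE))))"
    unfolding wt_at_def Let_def NE_def LC_def by simp
  also have "\<dots> \<le> sum_mset (image_mset card (mset_set Fin))"
  proof (rule sub_le)
    show "image_mset card (mset_set Fin) \<subseteq># image_mset card (mset_set NE)"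
      by (rule image_mset_subseteq_mono, rule subset_imp_msubset_mset_set[OF FinNE finNE])
    show "card LC - 2 \<le> size (image_mset card (mset_set Fin))" using cardFin by simp
  qed
  also have "\<dots> = sum card Fin" by (simp add: sum_unfold_sum_mset)
  also have "\<dots> = card (\<Union>Fin)"
  proof (rule card_Union_disjoint[symmetric])
    show "pairwise disjnt Fin"
    proof (unfold pairwise_def disjnt_def, intro ballI impI)
      fix D1 D2 assume "D1 \<in> Fin" "D2 \<in> Fin" "D1 \<noteq> D2"
      then have "D1 \<in> F" "D2 \<in> F" unfolding Fin_def by auto
      show "D1 \<inter> D2 = {}"
      proof (rule ccontr)
        assume "D1 \<inter> D2 \<noteq> {}"
        then obtain v where "v \<in> D1" "v \<in> D2" by blast
        then show False using sep[OF \<open>D1 \<in> F\<close> \<open>D2 \<in> F\<close> \<open>D1 \<noteq> D2\<close>] by blast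
      qed
    qed
    show "\<And>A. A \<in> Fin \<Longrightarrow> finite A" unfolding Fin_def using FH finH finite_subset by blast
  qed
  also have "\<dots> \<le> imp_at H I z"
    unfolding imp_at_def
  proof (rule card_mono)
    show "finite {w \<in> H. w \<noteq> z \<and> I w \<subseteq> I z}" using finH by simp
    show "\<Union>Fin \<subseteq> {w \<in> H. w \<noteq> z \<and> I w \<subseteq> I z}"
    proof
      fix w assume "w \<in> \<Union>Fin"
      then obtain D where "D \<in> Fin" "w \<in> D" by blast
      then have "D \<in> F" "U D \<subseteq> {a..b}" unfolding Fin_def by auto
      then have "w \<in> H" "w \<noteq> z" using FH Fz \<open>w \<in> D\<close> by auto
      moreover have "I w \<subseteq> I z" using \<open>U D \<subseteq> {a..b}\<close> \<open>w \<in> D\<close> ab unfolding U_def by auto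
      ultimately show "w \<in> {w \<in> H. w \<noteq> z \<and> I w \<subseteq> I z}" by simp
    qed
  qed
  also have "\<dots> \<le> imp_rep H I"
    unfolding imp_rep_def using finH zH by (intro Max_ge) auto
  finally show ?thesis unfolding H_def .
qed




theorem theorem3p1:
  fixes V :: "'a set" and E :: "'a \<Rightarrow> 'a \<Rightarrow> bool" and p :: nat and z :: 'a and C :: "'a set"
  assumes "simple_graph V E"
    and "interval_graph V E"
    and "connected_graph V E"
    and "balanced V E"
    and "p \<ge> 1"
    and "critical p V E"
    and "z \<in> V"
    and "\<forall>w\<in>V. wt_at V E w \<le> wt_at V E z"
    and "C \<in> local_comps V E z"
    and "exterior E z C"
  shows "card C = 2"
proof (rule ccontr)
  assume ne2: "card C \<noteq> 2"
  have sym: "\<forall>u\<in>V. \<forall>v\<in>V. E u v \<longleftrightarrow> E v u" and finV: "finite V"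
    using assms(1) unfolding simple_graph_def by auto
  interpret sg V E by unfold_locales (rule sym)
  define S0 where "S0 = V - {z}"
  have S0V: "S0 \<subseteq> V" unfolding S0_def by auto
  have Cc: "C \<in> components S0 E" using assms(9) unfolding local_comps_def S0_def .
  obtain u where u: "u \<in> C" "\<not> E z u" using assms(10) unfolding exterior_def by blast
  have CS0: "C \<subseteq> S0" using comp_eq[OF S0V Cc u(1)] by simp
  obtain n0 where n0: "n0 \<in> C" "E z n0"
    using neighbor_exists[OF assms(3) assms(7)] Cc unfolding S0_def by blast
  have "C \<subseteq> V" using CS0 S0V by blast
  then have finC: "finite C" using finV by (rule finite_subset)
  have "u \<noteq> n0" using u n0 by auto
  then have "card {u, n0} = 2" by simp
  moreover have "{u, n0} \<subseteq> C" using u n0 by simp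
  moreover have "card {u, n0} \<le> card C" using card_mono[OF finC \<open>{u, n0} \<subseteq> C\<close>] .
  ultimately have "2 \<le> card C" by linarith
  then have c3: "3 \<le> card C" using ne2 by simp
  have Rall: "\<And>r w. r \<in> C \<Longrightarrow> w \<in> C \<Longrightarrow> reach C E r w"
    using comp_inner[OF S0V Cc] by blast
  have "\<exists>x r nb nn. x \<in> C \<and> r \<in> C - {x} \<and> (\<forall>w\<in>C - {x}. reach (C - {x}) E r w) \<and>
          nb \<in> C - {x} \<and> E z nb \<and> nn \<in> C - {x} \<and> \<not> E z nn"
  proof (cases "\<exists>u'\<in>C. u' \<noteq> u \<and> \<not> E z u'")
    case True
    then obtain u' where u': "u' \<in> C" "u' \<noteq> u" "\<not> E z u'" by blast
    have c2: "2 \<le> card C" using c3 by simp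
    have "\<forall>w\<in>C. reach C E n0 w" using Rall n0(1) by blast
    then have "\<exists>x\<in>C. x \<noteq> n0 \<and> (\<forall>w\<in>C - {x}. reach (C - {x}) E n0 w)"
      by (rule noncut[OF finC n0(1) c2])
    then obtain x where x: "x \<in> C" "x \<noteq> n0" "\<forall>w\<in>C - {x}. reach (C - {x}) E n0 w"
      by blast
    show ?thesis
    proof (cases "x = u")
      case True
      then show ?thesis using x n0 u' by (intro exI[of _ x] exI[of _ n0] exI[of _ u']) auto
    next
      case False
      then show ?thesis using x n0 u by (intro exI[of _ x] exI[of _ n0] exI[of _ u]) auto
    qed
  next
    case False
    have c2: "2 \<le> card C" using c3 by simp
    have "\<forall>w\<in>C. reach C E u w" using Rall u(1) by blast
    then have "\<exists>x\<in>C. x \<noteq> u \<and> (\<forall>w\<in>C - {x}. reach (C - {x}) E u w)"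
      by (rule noncut[OF finC u(1) c2])
    then obtain x where x: "x \<in> C" "x \<noteq> u" "\<forall>w\<in>C - {x}. reach (C - {x}) E u w"
      by blast
    have "\<not> C \<subseteq> {x, u}"
    proof
      assume "C \<subseteq> {x, u}"
      then have "card C \<le> card {x, u}" by (intro card_mono) auto
      also have "\<dots> \<le> 2" by (cases "x = u") auto
      finally show False using c3 by simp
    qed
    then obtain w where w: "w \<in> C" "w \<noteq> x" "w \<noteq> u" by blast
    then have "E z w" using False by blast
    then show ?thesis using x w u by (intro exI[of _ x] exI[of _ u] exI[of _ w]) auto
  qed
  then obtain x r nb nn where xr: "x \<in> C" "r \<in> C - {x}" "\<forall>w\<in>C - {x}. reach (C - {x}) E r w"
    "nb \<in> C - {x}" "E z nb" "nn \<in> C - {x}" "\<not> E z nn" by blast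
  define H where "H = V - {x}"
  have xV: "x \<in> V" using xr(1) CS0 S0V by blast
  have HV: "H \<subset> V" unfolding H_def using xV by blast
  obtain I0 where I0: "is_interval_rep V E I0" using assms(2) unfolding interval_graph_def by blast
  have HV': "H \<subseteq> V" using HV by simp
  have "is_interval_rep H E I0"
    unfolding is_interval_rep_def
  proof (intro conjI ballI)
    fix v assume "v \<in> H"
    then have "v \<in> V" using HV' by blast
    then show "\<exists>a b. a \<le> b \<and> I0 v = {a..b}" using I0 unfolding is_interval_rep_def by simp
  next
    fix v w assume "v \<in> H" "w \<in> H"
    then have "v \<in> V" "w \<in> V" using HV' by blast+
    then show "v \<noteq> w \<longrightarrow> E v w = (I0 v \<inter> I0 w \<noteq> {})" using I0 unfolding is_interval_rep_def by simp
  qed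
  then have "\<exists>k. \<exists>I. is_interval_rep H E I \<and> imp_rep H I = k" by blast
  then have "\<exists>I. is_interval_rep H E I \<and> imp_rep H I = impropriety H E"
    unfolding impropriety_def by (rule LeastI_ex)
  then obtain I where I: "is_interval_rep H E I" "imp_rep H I = impropriety H E" by blast
  have "wt_at V E z \<le> imp_rep (V - {x}) I"
    by (rule key[OF assms(1,3,7,9) xr(1-7)]) (use I(1) H_def in simp)
  then have le: "wt_at V E z \<le> impropriety H E" using I(2) unfolding H_def by simp
  have "wt V E = wt_at V E z"
    unfolding wt_def by (rule Max_eqI) (use assms(7,8) finV in auto)
  then have "wt_at V E z = p" using assms(4,6) unfolding balanced_def critical_def by simp
  moreover have "impropriety H E < p" using assms(6) HV unfolding critical_def by blast
  ultimately show False using le by simp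
qed


end
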